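(* Let $q=p^f$ be a prime power and $N>2$ an integer with $N\mid(q-1)$. Let $\gamma$ be a primitive element of $\mathbb{F}_q$, $C_0=\langle\gamma^N\rangle$, and let $\eta_a=\sum_{x\in\gamma^aC_0}\psi(x)$, $0\le a\le N-1$. Assume the $\eta_a$ take exactly three rational values $\alpha_1,\alpha_2,\alpha_3$ in arithmetic progression, with $\alpha_1-\alpha_2=-t<0$ and $\alpha_3-\alpha_2=t>0$. Let $Z_N=\mathbb{F}_q^*/C_0$ with generator $\bar\gamma=\gamma C_0$, and $I_i=\{\bar\gamma^a\in Z_N:\eta_a=\alpha_i\}$, $i=1,2,3$. Then $I_1-I_3$ generates a circulant weighing matrix $\mathbf{CW}(N,q/t^2)$ if and only if $q$ is a square and $\alpha_2=(\sqrt q-1)/N$.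
   Context: $\psi$ is the canonical additive character of $\mathbb{F}_q$: $\psi(x)=\xi_p^{\mathrm{Tr}_{q/p}(x)}$. A circulant weighing matrix $\mathbf{CW}(N,w)$ is an $N\times N$ circulant matrix $M$ with entries in $\{-1,0,1\}$ satisfying $MM^\top=wI$. The element $I_1-I_3$ of the group ring $\mathbb{Z}[Z_N]$ (subsets identified with the sums of their elements) generates the circulant matrix with first row $(a_0,\dots,a_{N-1})$, where $a_i=1$ if $\bar\gamma^i\in I_1$, $a_i=-1$ if $\bar\gamma^i\in I_3$, and $a_i=0$ otherwise; it generates a $\mathbf{CW}(N,w)$ exactly when $(I_1-I_3)(I_1-I_3)^{(-1)}=w\cdot 1$ in $\mathbb{Z}[Z_N]$, where $(\sum a_gg)^{(-1)}=\sum a_gg^{-1}$. *)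

theory Defs
  imports "HOL-Analysis.Analysis"
begin

definition field_trace :: "nat \<Rightarrow> nat \<Rightarrow> 'a::field \<Rightarrow> 'a" where
  "field_trace p f x = (\<Sum>i<f. x ^ (p ^ i))"

text \<open>Canonical additive character psi(x) = xi_p^{Tr(x)}, where Tr(x) lies in the
  prime field {of_nat k | k < p} and xi_p = exp(2 pi i / p).\<close>
definition canon_add_char :: "nat \<Rightarrow> nat \<Rightarrow> 'a::field \<Rightarrow> complex" where
  "canon_add_char p f x =
     cis (2 * pi * real (THE k. k < p \<and> of_nat k = field_trace p f x) / real p)"

definition primitive_elem :: "'a::{finite,field} \<Rightarrow> bool" where
  "primitive_elem g \<longleftrightarrow> g \<noteq> 0 \<and> (\<forall>x. x \<noteq> 0 \<longrightarrow> (\<exists>k::nat. x = g ^ k))"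

definition gauss_period :: "nat \<Rightarrow> nat \<Rightarrow> nat \<Rightarrow> 'a::{finite,field} \<Rightarrow> nat \<Rightarrow> complex" where
  "gauss_period p f N g a =
     (\<Sum>x\<in>{g ^ (a + N * k) | k. True}. canon_add_char p f x)"

text \<open>The first row (a_0,...,a_{N-1}) of the circulant matrix generated by I1 - I3
  (index sets of exponents a in {0..N-1}).\<close>
definition row_of :: "nat set \<Rightarrow> nat set \<Rightarrow> nat \<Rightarrow> int" where
  "row_of I1 I3 i = (if i \<in> I1 then 1 else if i \<in> I3 then -1 else 0)"

text \<open>I1 - I3 generates a CW(N,w): (I1-I3)(I1-I3)^(-1) = w * 1 in Z[Z_N], i.e. for
  every k mod N, the coefficient sum_{i - j = k mod N} a_i a_j equals w if k = 0 and 0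
  otherwise.\<close>
definition generates_CW :: "nat \<Rightarrow> real \<Rightarrow> nat set \<Rightarrow> nat set \<Rightarrow> bool" where
  "generates_CW N w I1 I3 \<longleftrightarrow>
     (\<forall>k<N. real_of_int (\<Sum>i<N. \<Sum>j<N. if (i + N - j) mod N = k
                 then row_of I1 I3 i * row_of I1 I3 j else 0)
            = (if k = 0 then w else 0))"

end

theory Submission
  imports Defs "HOL-Computational_Algebra.Polynomial" "HOL-Computational_Algebra.Primes" "Jordan_Normal_Form.Char_Poly"
begin


lemma root_bound_frob:
  fixes c :: "nat \<Rightarrow> 'a::field"
  assumes "prime p" "r \<ge> 1" "c (r-1) \<noteq> 0"
  shows "card {x. (\<Sum>i<r. c i * x^(p^i)) = 0} \<le> p^(r-1)"
proof -
  define P where "P = (\<Sum>i<r. monom (c i) (p^i))"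
  have p1: "p > 1" using assms(1) prime_gt_1_nat by blast
  have ev: "poly P x = (\<Sum>i<r. c i * x^(p^i))" for x
    by (simp add: P_def poly_sum poly_monom)
  have "coeff P (p^(r-1)) = (\<Sum>i<r. if p^i = p^(r-1) then c i else 0)"
    by (simp add: P_def coeff_sum)
  also have "\<dots> = (\<Sum>i<r. if i = r-1 then c i else 0)"
    using p1 by (intro sum.cong) (auto simp: power_inject_exp)
  also have "\<dots> = c (r-1)" using assms(2) by (simp add: sum.delta)
  finally have co: "coeff P (p^(r-1)) = c (r-1)" .
  hence "P \<noteq> 0" using assms(3) by auto
  have "degree P \<le> p^(r-1)"
    unfolding P_def
  proof (rule degree_sum_le)
    fix i assume "i \<in> {..<r}"
    hence "p^i \<le> p^(r-1)" using p1 by (intro power_increasing) auto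
    thus "degree (monom (c i) (p^i)) \<le> p^(r-1)" using degree_monom_le order_trans by blast
  qed simp
  moreover have "card {x. poly P x = 0} \<le> degree P" using card_poly_roots_bound[OF \<open>P \<noteq> 0\<close>] .
  ultimately show ?thesis unfolding ev by simp
qed

locale ff =
  fixes p f :: nat and g :: "'a::{finite,field}"
  assumes p: "prime p" and char: "CHAR('a) = p" and card: "CARD('a) = p^f"
    and prim: "primitive_elem g"
begin


lemma p1: "p > 1" using p prime_gt_1_nat by blast
lemma p2: "p \<ge> 2" using p prime_ge_2_nat by blast

lemma q2: "CARD('a) \<ge> 2"
proof -
  have "{0::'a, 1} \<subseteq> UNIV" by simp
  hence "card {0::'a,1} \<le> CARD('a)" by (intro card_mono) auto
  thus ?thesis by simp
qed

lemma f1: "f \<ge> 1" using q2 card by (cases f) auto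

lemma g0: "g \<noteq> 0" using prim by (simp add: primitive_elem_def)

lemma frob: "(x + y :: 'a)^(p^i) = x^(p^i) + y^(p^i)"
  by (rule freshmans_dream') (auto simp: char p)

lemma frob_sum: "(sum h A :: 'a)^(p^i) = (\<Sum>a\<in>A. h a ^(p^i))"
  by (rule freshmans_dream_sum') (auto simp: char p)

lemma frob_neg: "(-x :: 'a)^(p^i) = -(x^(p^i))"
proof -
  have "(x + -x)^(p^i) = x^(p^i) + (-x)^(p^i)" by (rule frob)
  moreover have "(0::'a)^(p^i) = 0" using p1 by simp
  ultimately show ?thesis by (simp add: eq_neg_iff_add_eq_0 add.commute)
qed

lemma frob_diff: "(x - y :: 'a)^(p^i) = x^(p^i) - y^(p^i)"
  using frob[of x "-y" i] frob_neg[of y i] by simp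

end


definition rootu :: "nat \<Rightarrow> complex" where "rootu n = cis (2 * pi / real n)"

lemma rootu_pow: "rootu n ^ k = exp (2 * of_real pi * \<i> * of_nat k / of_nat n)"
proof -
  have "rootu n ^ k = cis (real k * (2 * pi / real n))" unfolding rootu_def by (rule Complex.DeMoivre)
  also have "\<dots> = exp (\<i> * complex_of_real (real k * (2 * pi / real n)))" by (simp add: cis_conv_exp)
  also have "\<dots> = exp (2 * of_real pi * \<i> * of_nat k / of_nat n)"
    by (simp add: divide_inverse mult_ac)
  finally show ?thesis .
qed

lemma rootu_pow_eq: "n \<ge> 1 \<Longrightarrow> rootu n ^ a = rootu n ^ b \<longleftrightarrow> a mod n = b mod n"
  unfolding rootu_pow by (rule complex_root_unity_eq)

lemma rootu_pow_eq1: "n \<ge> 1 \<Longrightarrow> rootu n ^ a = 1 \<longleftrightarrow> n dvd a"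
  unfolding rootu_pow by (rule complex_root_unity_eq_1)

lemma rootu_n: "n \<ge> 1 \<Longrightarrow> rootu n ^ n = 1"
  by (simp add: rootu_pow_eq1)

lemma rootu_pow_mod: "n \<ge> 1 \<Longrightarrow> rootu n ^ (a mod n) = rootu n ^ a"
  by (simp add: rootu_pow_eq)

lemma norm_rootu [simp]: "norm (rootu n) = 1" by (simp add: rootu_def)

lemma rootu_ne0 [simp]: "rootu n \<noteq> 0" by (simp add: rootu_def)

lemma cnj_rootu_pow: "n \<ge> 1 \<Longrightarrow> cnj (rootu n ^ a) * rootu n ^ a = 1"
proof -
  have "cnj (rootu n) * rootu n = 1" by (simp only: rootu_def cis_cnj cis_mult) simp
  thus ?thesis by (simp add: power_mult_distrib[symmetric])
qed

context ff begin

lemma ex_ord: "\<exists>d>0. g ^ d = 1"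
proof -
  have "\<not> inj (\<lambda>k::nat. g ^ k)"
  proof
    assume "inj (\<lambda>k::nat. g ^ k)"
    hence "infinite (range (\<lambda>k::nat. g ^ k))" using finite_imageD by blast
    thus False by simp
  qed
  then obtain a b :: nat where ab: "g^a = g^b" "a \<noteq> b" unfolding inj_def by blast
  { fix a b :: nat assume "g^a = g^b" "a < b"
    moreover have "g^a * g^(b-a) = g^b" using \<open>a<b\<close> by (simp flip: power_add)
    ultimately have "g^a * g^(b-a) = g^a * 1" by simp
    hence "g^(b-a) = 1" using g0 by simp
    hence "\<exists>d>0. g^d = 1" using \<open>a<b\<close> by (intro exI[of _ "b-a"]) auto }
  with ab show ?thesis by (metis linorder_neqE_nat)
qed

definition ordg where "ordg = (LEAST d. d > 0 \<and> g ^ d = 1)"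

lemma ordg: "ordg > 0" "g ^ ordg = 1"
  using LeastI_ex[OF ex_ord] by (auto simp: ordg_def)

lemma ordg_min: "0 < d \<Longrightarrow> d < ordg \<Longrightarrow> g ^ d \<noteq> 1"
  using not_less_Least by (auto simp: ordg_def)

lemma pow_mod_ordg: "g ^ (k mod ordg) = g ^ k"
proof -
  have "g ^ k = g ^ (ordg * (k div ordg)) * g ^ (k mod ordg)"
    by (metis div_mult_mod_eq power_add mult.commute)
  also have "\<dots> = g ^ (k mod ordg)" by (simp add: power_mult ordg)
  finally show ?thesis by simp
qed

lemma pow_inj_lt: "a < ordg \<Longrightarrow> b < ordg \<Longrightarrow> g ^ a = g ^ b \<Longrightarrow> a = b"
proof (rule ccontr)
  assume *: "a < ordg" "b < ordg" "g ^ a = g ^ b" "a \<noteq> b"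
  { fix a b assume "a < ordg" "b < ordg" "g ^ a = g ^ b" "a < b"
    moreover have "g^a * g^(b-a) = g^b" using \<open>a<b\<close> by (simp flip: power_add)
    ultimately have "g^a * g^(b-a) = g^a * 1" by simp
    hence "g^(b-a) = 1" using g0 by simp
    moreover have "b - a < ordg" using \<open>b<ordg\<close> by linarith
    ultimately have False using ordg_min[of "b-a"] \<open>a<b\<close> by auto }
  with * show False by (metis linorder_neqE_nat)
qed

lemma pow_eq_iff: "g ^ a = g ^ b \<longleftrightarrow> a mod ordg = b mod ordg"
proof
  assume "g ^ a = g ^ b"
  hence "g ^ (a mod ordg) = g ^ (b mod ordg)" by (simp add: pow_mod_ordg)
  thus "a mod ordg = b mod ordg" using ordg by (intro pow_inj_lt) auto
next
  assume "a mod ordg = b mod ordg"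
  thus "g ^ a = g ^ b" by (metis pow_mod_ordg)
qed

lemma nonzero_eq: "{x::'a. x \<noteq> 0} = (\<lambda>k. g ^ k) ` {..<ordg}"
proof (intro equalityI subsetI)
  fix x assume "x \<in> {x::'a. x \<noteq> 0}"
  hence "x \<noteq> 0" by simp
  then obtain k :: nat where "x = g ^ k" using prim by (auto simp: primitive_elem_def)
  thus "x \<in> (\<lambda>k. g ^ k) ` {..<ordg}"
    using ordg by (intro image_eqI[of _ _ "k mod ordg"]) (auto simp: pow_mod_ordg)
qed (use g0 in auto)

lemma ordg_eq: "ordg = CARD('a) - 1"
proof -
  have "card {x::'a. x \<noteq> 0} = ordg"
    unfolding nonzero_eq by (subst card_image) (auto intro!: inj_onI pow_inj_lt)
  moreover have "{x::'a. x \<noteq> 0} = UNIV - {0}" by auto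
  ultimately show ?thesis by (simp add: card_Diff_singleton)
qed

lemma pow_eq_iff': "g ^ a = g ^ b \<longleftrightarrow> a mod (CARD('a) - 1) = b mod (CARD('a) - 1)"
  using pow_eq_iff ordg_eq by simp

lemma pow_q1: "(x::'a) \<noteq> 0 \<Longrightarrow> x ^ (CARD('a) - 1) = 1"
proof -
  assume "x \<noteq> 0"
  then obtain k :: nat where "x = g ^ k" using prim by (auto simp: primitive_elem_def)
  thus ?thesis using ordg ordg_eq by (simp flip: power_mult add: mult.commute[of k] power_mult)
qed


end


context ff begin

lemma pow_q: "x ^ CARD('a) = (x::'a)"
proof (cases "x = 0")
  case True thus ?thesis using q2 by simp
next
  case False
  have c: "CARD('a) = Suc (CARD('a) - 1)" using q2 by simp
  have "x ^ CARD('a) = x ^ (CARD('a) - 1) * x" by (subst c) (simp only: power_Suc2)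
  thus ?thesis using pow_q1[OF False] by simp
qed

definition ind :: "'a \<Rightarrow> nat" where "ind x = (THE k. k < CARD('a) - 1 \<and> g ^ k = x)"

lemma ind: "(x::'a) \<noteq> 0 \<Longrightarrow> ind x < CARD('a) - 1 \<and> g ^ ind x = x"
proof -
  assume "x \<noteq> 0"
  hence "x \<in> {x. x \<noteq> 0}" by simp
  hence "x \<in> (\<lambda>k. g ^ k) ` {..<ordg}" by (simp only: nonzero_eq)
  then obtain k where k: "k < ordg" "g^k = x" by auto
  have uniq: "a = b" if "a < CARD('a) - 1" "g^a = x" "b < CARD('a) - 1" "g^b = x" for a b
  proof -
    have "g^a = g^b" using that by simp
    thus "a = b" using pow_inj_lt[of a b] ordg_eq that by simp
  qed
  have "k < CARD('a) - 1 \<and> g ^ k = x" using k ordg_eq by simp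
  hence "\<exists>!k. k < CARD('a) - 1 \<and> g ^ k = x" using uniq by blast
  thus ?thesis unfolding ind_def by (rule theI')
qed

lemma ind_pow: "ind (g ^ k) = k mod (CARD('a) - 1)"
proof -
  have ne: "g ^ k \<noteq> 0" using g0 by simp
  from ind[OF ne] have "g ^ ind (g^k) = g ^ k" "ind (g^k) < CARD('a) - 1" by auto
  moreover have "ind (g^k) mod (CARD('a)-1) = k mod (CARD('a)-1)"
    using pow_eq_iff'[of "ind (g^k)" k] calculation by simp
  ultimately show ?thesis by simp
qed


end


context ff begin

abbreviation Tr :: "'a \<Rightarrow> 'a" where "Tr \<equiv> field_trace p f"

lemma tr_add: "Tr (x + y) = Tr x + Tr (y::'a)"
  by (simp add: field_trace_def frob sum.distrib)

lemma tr_neg: "Tr (- x) = - Tr (x::'a)"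
  by (simp add: field_trace_def frob_neg sum_negf)

lemma tr_0: "Tr (0::'a) = 0"
  using p1 by (simp add: field_trace_def power_0_left)

lemma tr_p: "Tr x ^ p = Tr (x::'a)"
proof -
  have "Tr x ^ p = Tr x ^ (p^1)" by simp
  also have "\<dots> = (\<Sum>i<f. x ^ (p ^ Suc i))"
    unfolding field_trace_def frob_sum by (simp add: power_mult[symmetric] mult.commute)
  also have "\<dots> = Tr x"
  proof -
    have A: "(\<Sum>i<Suc f. x ^ (p ^ i)) = x ^ (p^0) + (\<Sum>i<f. x ^ (p ^ Suc i))"
      by (rule sum.lessThan_Suc_shift)
    have B: "(\<Sum>i<Suc f. x ^ (p ^ i)) = Tr x + x ^ (p ^ f)"
      by (simp only: sum.lessThan_Suc field_trace_def)
    have C: "x ^ (p ^ f) = x" using pow_q card by simp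
    from A B C show ?thesis by simp
  qed
  finally show ?thesis .
qed

lemma of_nat_pow_p: "(of_nat k :: 'a) ^ p = of_nat k"
proof (induction k)
  case 0 thus ?case using p1 by simp
next
  case (Suc k)
  have e: "(of_nat (Suc k) :: 'a) = 1 + of_nat k" by simp
  have "(1 + of_nat k :: 'a) ^ (p^1) = 1^(p^1) + (of_nat k)^(p^1)"
    by (rule frob)
  thus ?case using Suc by (simp add: e)
qed

lemma of_nat_p [simp]: "(of_nat p :: 'a) = 0"
  using of_nat_CHAR[where 'a='a] char by simp

lemma of_nat_mod_p: "(of_nat (m mod p) :: 'a) = of_nat m"
proof -
  have "(of_nat m :: 'a) = of_nat (p * (m div p) + m mod p)" by simp
  also have "\<dots> = of_nat (m mod p)" by (simp only: of_nat_add of_nat_mult of_nat_p) simp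
  finally show ?thesis by simp
qed

lemma of_nat_inj_p: "a < p \<Longrightarrow> b < p \<Longrightarrow> (of_nat a :: 'a) = of_nat b \<Longrightarrow> a = b"
proof (rule ccontr)
  assume *: "a < p" "b < p" "(of_nat a :: 'a) = of_nat b" "a \<noteq> b"
  have H: False if "a < p" "b < p" "(of_nat a :: 'a) = of_nat b" "a < b" for a b
  proof -
    have "p dvd (b - a)" using of_nat_eq_iff_char_dvd[of a b, where 'a='a] char that by simp
    moreover have "0 < b - a" "b - a < p" using that by auto
    ultimately show False using nat_dvd_not_less by blast
  qed
  from * consider "a < b" | "b < a" by linarith
  thus False
  proof cases
    case 1 thus False using H[of a b] * by blast
  next
    case 2
    have "(of_nat b :: 'a) = of_nat a" using * by simp
    thus False using H[of b a] * 2 by blast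
  qed
qed

lemma prime_field: "(y::'a) ^ p = y \<Longrightarrow> \<exists>k<p. of_nat k = y"
proof -
  assume y: "y ^ p = y"
  define S where "S = {x::'a. x ^ p = x}"
  have "card S \<le> p ^ (2 - 1)"
  proof -
    have "S = {x::'a. (\<Sum>i<2. (if i = 0 then -1 else 1) * x^(p^i)) = 0}"
      by (auto simp: S_def eval_nat_numeral)
    also have "card \<dots> \<le> p ^ (2 - 1)" by (rule root_bound_frob) (auto simp: p)
    finally show ?thesis .
  qed
  moreover have sub: "of_nat ` {..<p} \<subseteq> S" by (auto simp: S_def of_nat_pow_p)
  moreover have "card (of_nat ` {..<p} :: 'a set) = p"
    by (subst card_image) (auto intro!: inj_onI of_nat_inj_p)
  moreover have "card (of_nat ` {..<p} :: 'a set) \<le> card S" by (rule card_mono[OF _ sub]) simp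
  ultimately have E: "of_nat ` {..<p} = S" by (intro card_subset_eq) auto
  have "y \<in> S" using y by (simp add: S_def)
  hence "y \<in> of_nat ` {..<p}" using E by simp
  thus ?thesis by auto
qed

definition trn :: "'a \<Rightarrow> nat" where "trn x = (THE k. k < p \<and> of_nat k = Tr x)"

lemma trn: "trn x < p \<and> of_nat (trn x) = Tr x"
proof -
  obtain k where "k < p" "of_nat k = Tr x" using prime_field[OF tr_p] by blast
  hence "\<exists>!k. k < p \<and> of_nat k = Tr x" using of_nat_inj_p by auto
  thus ?thesis unfolding trn_def by (rule theI')
qed

lemma trn_unique: "k < p \<Longrightarrow> of_nat k = Tr x \<Longrightarrow> trn x = k"
  using trn[of x] of_nat_inj_p[of "trn x" k] by simp

abbreviation psi :: "'a \<Rightarrow> complex" where "psi \<equiv> canon_add_char p f"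

lemma psi_eq: "psi x = rootu p ^ trn x"
proof -
  have "rootu p ^ trn x = cis (real (trn x) * (2 * pi / real p))"
    unfolding rootu_def by (rule Complex.DeMoivre)
  thus ?thesis by (simp add: canon_add_char_def trn_def mult_ac)
qed

lemma trn_add: "trn (x + y) = (trn x + trn y) mod p"
  using p1 by (intro trn_unique) (auto simp: of_nat_mod_p tr_add trn)

lemma psi_add: "psi (x + y) = psi x * psi y"
proof -
  have "psi (x + y) = rootu p ^ ((trn x + trn y) mod p)" by (simp only: psi_eq trn_add)
  also have "\<dots> = rootu p ^ (trn x + trn y)" using p1 by (intro rootu_pow_mod) simp
  also have "\<dots> = psi x * psi y" by (simp only: psi_eq power_add)
  finally show ?thesis .
qed

lemma psi_one_iff: "psi x = 1 \<longleftrightarrow> Tr x = 0"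
proof -
  have "psi x = 1 \<longleftrightarrow> p dvd trn x" using p1 by (simp add: psi_eq rootu_pow_eq1)
  also have "\<dots> \<longleftrightarrow> trn x = 0" using trn[of x] by (auto dest: nat_dvd_not_less)
  also have "\<dots> \<longleftrightarrow> Tr x = 0" using trn[of x] trn_unique[of 0 x] p1 by auto
  finally show ?thesis .
qed

lemma psi_0 [simp]: "psi 0 = 1" by (simp add: psi_one_iff tr_0)

lemma psi_neg: "psi (- x) * psi x = 1"
  by (simp flip: psi_add)

lemma norm_psi [simp]: "norm (psi x) = 1"
  by (simp add: psi_eq norm_power)

lemma cnj_psi: "cnj (psi x) = psi (- x)"
proof -
  have "cnj (psi x) * psi x = 1" using cnj_rootu_pow[of p "trn x"] p1 by (simp add: psi_eq)
  moreover have "psi x \<noteq> 0"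
  proof
    assume "psi x = 0" hence "norm (psi x) = 0" by simp
    thus False by simp
  qed
  moreover have "psi (- x) * psi x = 1" by (rule psi_neg)
  ultimately show ?thesis by (metis mult_cancel_right)
qed

lemma tr_nontriv: "\<exists>x::'a. Tr x \<noteq> 0"
proof (rule ccontr)
  assume "\<not> ?thesis"
  hence "{x::'a. (\<Sum>i<f. 1 * x^(p^i)) = 0} = UNIV" by (auto simp: field_trace_def)
  moreover have "card {x::'a. (\<Sum>i<f. 1 * x^(p^i)) = 0} \<le> p^(f-1)"
    by (rule root_bound_frob) (use p f1 in auto)
  moreover have "p^(f-1) < p^f" using p1 f1 by (intro power_strict_increasing) auto
  ultimately show False using card by simp
qed

lemma char_sum_subgroup:
  assumes S: "0 \<in> S" "\<And>a b. a \<in> S \<Longrightarrow> b \<in> S \<Longrightarrow> a + b \<in> S" "\<And>a. a \<in> S \<Longrightarrow> - a \<in> S"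
  shows "(\<Sum>z\<in>S. psi (x * z)) = (if \<forall>z\<in>S. Tr (x * z) = 0 then of_nat (card S) else 0)"
proof (cases "\<forall>z\<in>S. Tr (x * z) = 0")
  case True
  hence "(\<Sum>z\<in>S. psi (x * z)) = (\<Sum>z\<in>S. 1)" by (intro sum.cong) (auto simp: psi_one_iff)
  thus ?thesis using True by simp
next
  case False
  then obtain z0 where z0: "z0 \<in> S" "Tr (x * z0) \<noteq> 0" by auto
  have bij: "bij_betw (\<lambda>z. z + z0) S S"
  proof (rule bij_betw_imageI)
    show "inj_on (\<lambda>z. z + z0) S" by (auto intro: inj_onI)
    show "(\<lambda>z. z + z0) ` S = S"
    proof (intro equalityI subsetI)
      fix w assume "w \<in> (\<lambda>z. z + z0) ` S" thus "w \<in> S" using S z0 by auto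
    next
      fix w assume w: "w \<in> S"
      have "w + - z0 \<in> S" using S(2)[OF w S(3)[OF z0(1)]] .
      moreover have "w = (w + - z0) + z0" by simp
      ultimately show "w \<in> (\<lambda>z. z + z0) ` S" by blast
    qed
  qed
  have "(\<Sum>z\<in>S. psi (x * z)) = (\<Sum>z\<in>S. psi (x * (z + z0)))"
    using sum.reindex_bij_betw[OF bij, of "\<lambda>z. psi (x * z)"] by simp
  also have "\<dots> = (\<Sum>z\<in>S. psi (x * z)) * psi (x * z0)"
    by (simp add: distrib_left psi_add sum_distrib_right)
  finally have "(\<Sum>z\<in>S. psi (x * z)) * (1 - psi (x * z0)) = 0" by (simp add: algebra_simps)
  moreover have "psi (x * z0) \<noteq> 1" using z0 psi_one_iff by simp
  ultimately have "(\<Sum>z\<in>S. psi (x * z)) = 0" by simp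
  thus ?thesis using False by (simp only: if_False)
qed

lemma sum_psi_mult: "(c::'a) \<noteq> 0 \<Longrightarrow> (\<Sum>z\<in>UNIV. psi (c * z)) = 0"
proof -
  assume c: "c \<noteq> 0"
  obtain x0 :: 'a where x0: "Tr x0 \<noteq> 0" using tr_nontriv by blast
  have "\<not> (\<forall>z\<in>UNIV. Tr (c * z) = 0)"
  proof
    assume "\<forall>z\<in>UNIV. Tr (c * z) = 0"
    hence "Tr (c * (x0 / c)) = 0" by blast
    with c x0 show False by simp
  qed
  thus ?thesis by (subst char_sum_subgroup) auto
qed

end


lemma geom_zero: "(z::complex) ^ n = 1 \<Longrightarrow> z \<noteq> 1 \<Longrightarrow> (\<Sum>i<n. z ^ i) = 0"
  by (simp add: sum_gp_strict)

context ff begin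

abbreviation NZ :: "'a set" where "NZ \<equiv> UNIV - {0}"

lemma bij_pow: "bij_betw (\<lambda>k. g ^ k) {..<CARD('a) - 1} NZ"
proof (rule bij_betw_imageI)
  show "inj_on (\<lambda>k. g ^ k) {..<CARD('a) - 1}"
    using pow_inj_lt ordg_eq by (auto intro!: inj_onI)
  have "(\<lambda>k. g ^ k) ` {..<CARD('a) - 1} = {x. x \<noteq> 0}" using nonzero_eq ordg_eq by simp
  also have "\<dots> = NZ" by auto
  finally show "(\<lambda>k. g ^ k) ` {..<CARD('a) - 1} = NZ" .
qed

lemma sum_NZ: "(\<Sum>x\<in>NZ. h x) = (\<Sum>k<CARD('a) - 1. h (g ^ k))"
  using sum.reindex_bij_betw[OF bij_pow, of h] by simp

lemma ind_mult: "(x::'a) \<noteq> 0 \<Longrightarrow> y \<noteq> 0 \<Longrightarrow> ind (x * y) mod (CARD('a) - 1) = (ind x + ind y) mod (CARD('a) - 1)"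
proof -
  assume x: "x \<noteq> 0" and y: "y \<noteq> 0"
  have "g ^ ind (x * y) = g ^ (ind x + ind y)"
    using ind[OF x] ind[OF y] ind[of "x*y"] x y by (simp add: power_add)
  thus ?thesis using pow_eq_iff' by blast
qed

lemma ind_1: "ind (1::'a) = 0"
  using ind_pow[of 0] by simp

lemma sum_all_psi: "(\<Sum>z\<in>UNIV. psi z) = 0"
  using sum_psi_mult[of 1] by simp

lemma sum_NZ_psi_mult: "(\<Sum>y\<in>NZ. psi (c * y)) = (if c = 0 then of_nat (CARD('a) - 1) else -1)"
proof -
  have "(\<Sum>y\<in>UNIV. psi (c * y)) = (\<Sum>y\<in>NZ. psi (c * y)) + psi (c * 0)"
    by (subst sum.remove[of UNIV 0]) auto
  moreover have "(\<Sum>y\<in>UNIV. psi (c * y)) = (if c = 0 then of_nat CARD('a) else 0)"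
    using sum_psi_mult[of c] by auto
  ultimately have A: "(\<Sum>y\<in>NZ. psi (c * y)) + 1 = (if c = 0 then of_nat CARD('a) else 0)" by simp
  have "(\<Sum>y\<in>NZ. psi (c * y)) = ((\<Sum>y\<in>NZ. psi (c * y)) + 1) - 1" by simp
  also have "\<dots> = (if c = 0 then of_nat CARD('a) else 0) - 1" by (simp only: A)
  finally show ?thesis using q2 by (auto simp: of_nat_diff)
qed

end

locale ffN = ff p f g for p f :: nat and g :: "'a::{finite,field}" +
  fixes N :: nat
  assumes N1: "N \<ge> 1" and Ndvd: "N dvd (CARD('a) - 1)"
begin

definition chi :: "nat \<Rightarrow> 'a \<Rightarrow> complex" where "chi j x = rootu N ^ (j * ind x)"

definition G :: "nat \<Rightarrow> complex" where "G j = (\<Sum>x\<in>NZ. chi j x * psi x)"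

lemma coset_eq: "a < N \<Longrightarrow> {g ^ (a + N * k) | k. True} = {x. x \<noteq> 0 \<and> ind x mod N = a}"
proof (intro equalityI subsetI)
  fix x assume a: "a < N" and "x \<in> {g ^ (a + N * k) | k. True}"
  then obtain k where x: "x = g ^ (a + N * k)" by auto
  have "ind x mod N = (a + N * k) mod (CARD('a) - 1) mod N" by (simp add: x ind_pow)
  also have "\<dots> = (a + N * k) mod N" by (rule mod_mod_cancel[OF Ndvd])
  also have "\<dots> = a" using a by simp
  finally show "x \<in> {x. x \<noteq> 0 \<and> ind x mod N = a}" using x g0 by simp
next
  fix x assume a: "a < N" and "x \<in> {x. x \<noteq> 0 \<and> ind x mod N = a}"
  hence x: "x \<noteq> 0" "ind x mod N = a" by auto
  have "x = g ^ ind x" using ind[OF x(1)] by simp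
  also have "ind x = a + N * (ind x div N)" using x(2) by (metis mod_mult_div_eq add.commute)
  finally show "x \<in> {g ^ (a + N * k) | k. True}" by blast
qed

lemma chi_coset: "x \<noteq> 0 \<Longrightarrow> chi j x = rootu N ^ (j * (ind x mod N))"
  unfolding chi_def using N1 by (subst rootu_pow_eq) (auto simp: mod_mult_right_eq)

lemma eta_G: "(\<Sum>a<N. rootu N ^ (j * a) * gauss_period p f N g a) = G j"
proof -
  have "G j = (\<Sum>a<N. \<Sum>x\<in>{x. x \<in> NZ \<and> ind x mod N = a}. chi j x * psi x)"
    unfolding G_def using N1 by (intro sum.group[symmetric]) auto
  also have "\<dots> = (\<Sum>a<N. rootu N ^ (j * a) * gauss_period p f N g a)"
  proof (intro sum.cong refl)
    fix a assume "a \<in> {..<N}"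
    hence a: "a < N" by simp
    have "(\<Sum>x\<in>{x. x \<in> NZ \<and> ind x mod N = a}. chi j x * psi x)
        = (\<Sum>x\<in>{x. x \<noteq> 0 \<and> ind x mod N = a}. rootu N ^ (j * a) * psi x)"
      by (intro sum.cong) (auto simp: chi_coset)
    also have "\<dots> = rootu N ^ (j * a) * gauss_period p f N g a"
      unfolding gauss_period_def coset_eq[OF a] by (simp add: sum_distrib_left)
    finally show "(\<Sum>x\<in>{x. x \<in> NZ \<and> ind x mod N = a}. chi j x * psi x) = rootu N ^ (j * a) * gauss_period p f N g a" .
  qed
  finally show ?thesis by simp
qed

lemma chi_mult: "x \<noteq> 0 \<Longrightarrow> y \<noteq> 0 \<Longrightarrow> chi j (x * y) = chi j x * chi j y"
proof -
  assume x: "x \<noteq> 0" and y: "y \<noteq> 0"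
  have "ind (x * y) mod N = (ind x + ind y) mod N"
    using ind_mult[OF x y] by (metis mod_mod_cancel[OF Ndvd])
  hence "(j * ind (x * y)) mod N = (j * (ind x + ind y)) mod N"
    by (metis mod_mult_right_eq)
  hence "chi j (x * y) = rootu N ^ (j * (ind x + ind y))"
    unfolding chi_def using N1 by (subst rootu_pow_eq) auto
  thus ?thesis by (simp add: chi_def distrib_left power_add)
qed

lemma chi_1: "chi j 1 = 1" by (simp add: chi_def ind_1)

lemma cnj_chi: "cnj (chi j x) * chi j x = 1"
  unfolding chi_def using cnj_rootu_pow N1 by simp

lemma sum_chi: "\<not> N dvd j \<Longrightarrow> (\<Sum>x\<in>NZ. chi j x) = 0"
proof -
  assume nd: "\<not> N dvd j"
  have "(\<Sum>x\<in>NZ. chi j x) = (\<Sum>k<CARD('a) - 1. (rootu N ^ j) ^ k)"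
  proof -
    have "(\<Sum>x\<in>NZ. chi j x) = (\<Sum>k<CARD('a) - 1. chi j (g ^ k))" by (rule sum_NZ)
    also have "\<dots> = (\<Sum>k<CARD('a) - 1. (rootu N ^ j) ^ k)"
      by (intro sum.cong refl) (simp add: chi_def ind_pow power_mult)
    finally show ?thesis .
  qed
  also have "\<dots> = 0"
  proof (rule geom_zero)
    show "(rootu N ^ j) ^ (CARD('a) - 1) = 1"
      using N1 Ndvd by (simp add: power_mult[symmetric] rootu_pow_eq1)
    show "rootu N ^ j \<noteq> 1" using N1 nd by (simp add: rootu_pow_eq1)
  qed
  finally show ?thesis .
qed

lemma G_norm: "\<not> N dvd j \<Longrightarrow> G j * cnj (G j) = of_nat CARD('a)"
proof -
  assume nd: "\<not> N dvd j"
  have "G j * cnj (G j) = (\<Sum>x\<in>NZ. \<Sum>y\<in>NZ. chi j x * psi x * (cnj (chi j y) * psi (- y)))"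
    unfolding G_def by (simp add: sum_product cnj_sum cnj_psi)
  also have "\<dots> = (\<Sum>y\<in>NZ. \<Sum>x\<in>NZ. chi j x * psi x * (cnj (chi j y) * psi (- y)))"
    by (rule sum.swap)
  also have "\<dots> = (\<Sum>y\<in>NZ. \<Sum>u\<in>NZ. chi j u * psi ((u - 1) * y))"
  proof (rule sum.cong[OF refl])
    fix y :: 'a assume "y \<in> NZ"
    hence y: "y \<noteq> 0" by simp
    have bij: "bij_betw (\<lambda>u. u * y) NZ NZ"
      by (rule bij_betwI[of _ _ _ "\<lambda>x. x / y"]) (use y in auto)
    have "(\<Sum>x\<in>NZ. chi j x * psi x * (cnj (chi j y) * psi (- y)))
          = (\<Sum>u\<in>NZ. chi j (u * y) * psi (u * y) * (cnj (chi j y) * psi (- y)))"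
      using sum.reindex_bij_betw[OF bij, of "\<lambda>x. chi j x * psi x * (cnj (chi j y) * psi (- y))"] by simp
    also have "\<dots> = (\<Sum>u\<in>NZ. chi j u * psi ((u - 1) * y))"
    proof (intro sum.cong refl)
      fix u :: 'a assume "u \<in> NZ" hence u: "u \<noteq> 0" by simp
      have "chi j (u * y) * psi (u * y) * (cnj (chi j y) * psi (- y))
          = chi j u * (cnj (chi j y) * chi j y) * (psi (u * y) * psi (- y))"
        by (simp add: chi_mult[OF u y] mult_ac)
      also have "\<dots> = chi j u * psi (u * y + - y)" by (simp only: cnj_chi mult_1_right psi_add[symmetric])
      also have "\<dots> = chi j u * psi ((u - 1) * y)"
        by (rule arg_cong[where f="\<lambda>z. chi j u * psi z"]) (simp add: algebra_simps)
      finally show "chi j (u * y) * psi (u * y) * (cnj (chi j y) * psi (- y)) = chi j u * psi ((u - 1) * y)" .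
    qed
    finally show "(\<Sum>x\<in>NZ. chi j x * psi x * (cnj (chi j y) * psi (- y))) = (\<Sum>u\<in>NZ. chi j u * psi ((u - 1) * y))" .
  qed
  also have "\<dots> = (\<Sum>u\<in>NZ. chi j u * (\<Sum>y\<in>NZ. psi ((u - 1) * y)))"
    by (subst sum.swap) (simp add: sum_distrib_left)
  also have "\<dots> = (\<Sum>u\<in>NZ. chi j u * ((if u = 1 then of_nat CARD('a) else 0) - 1))"
  proof (intro sum.cong refl)
    fix u :: 'a
    show "chi j u * (\<Sum>y\<in>NZ. psi ((u - 1) * y)) = chi j u * ((if u = 1 then of_nat CARD('a) else 0) - 1)"
      using q2 by (simp add: sum_NZ_psi_mult of_nat_diff)
  qed
  also have "\<dots> = (\<Sum>u\<in>NZ. chi j u * (if u = 1 then of_nat CARD('a) else 0)) - (\<Sum>u\<in>NZ. chi j u)"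
    by (simp add: right_diff_distrib sum_subtractf)
  also have "(\<Sum>u\<in>NZ. chi j u * (if u = 1 then of_nat CARD('a) else 0)) = (\<Sum>u\<in>NZ. if u = 1 then chi j u * of_nat CARD('a) else 0)"
    by (intro sum.cong) auto
  also have "\<dots> = of_nat CARD('a)" by (simp add: sum.delta chi_1)
  also have "(\<Sum>u\<in>NZ. chi j u) = 0" using sum_chi[OF nd] .
  finally show ?thesis by simp
qed

end


lemma rootu_cnj_mult: "N \<ge> 1 \<Longrightarrow> l \<le> m \<Longrightarrow> rootu N ^ (m - l) = rootu N ^ m * cnj (rootu N ^ l)"
proof -
  assume N: "N \<ge> 1" and lm: "l \<le> m"
  have e: "rootu N ^ (m - l) * rootu N ^ l = rootu N ^ m"
    using lm by (simp flip: power_add)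
  have "rootu N ^ (m - l) = rootu N ^ (m - l) * (cnj (rootu N ^ l) * rootu N ^ l)"
    by (simp only: cnj_rootu_pow[OF N] mult_1_right)
  also have "\<dots> = (rootu N ^ (m - l) * rootu N ^ l) * cnj (rootu N ^ l)"
    by (simp only: mult_ac)
  also have "\<dots> = rootu N ^ m * cnj (rootu N ^ l)" by (simp only: e)
  finally show ?thesis .
qed

lemma rootu_orth:
  assumes N: "N \<ge> 1" and k: "k < N" and k': "k' < N"
  shows "(\<Sum>j<N. rootu N ^ (j * k) * cnj (rootu N ^ (j * k'))) = (if k = k' then of_nat N else 0)"
proof -
  define z where "z = rootu N ^ (k + N - k')"
  have z: "z = rootu N ^ (k + N) * cnj (rootu N ^ k')"
    unfolding z_def using N k' by (intro rootu_cnj_mult) auto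
  have "rootu N ^ (k + N) = rootu N ^ k" using rootu_n[OF N] by (simp add: power_add)
  hence z': "z = rootu N ^ k * cnj (rootu N ^ k')" using z by simp
  have "(\<Sum>j<N. rootu N ^ (j * k) * cnj (rootu N ^ (j * k'))) = (\<Sum>j<N. z ^ j)"
  proof (intro sum.cong refl)
    fix j
    have "rootu N ^ (j * k) = (rootu N ^ k) ^ j" by (simp add: power_mult mult.commute[of j])
    moreover have "cnj (rootu N ^ (j * k')) = (cnj (rootu N ^ k')) ^ j"
      by (simp only: power_mult mult.commute[of j] complex_cnj_power)
    ultimately show "rootu N ^ (j * k) * cnj (rootu N ^ (j * k')) = z ^ j"
      by (simp add: z' power_mult_distrib)
  qed
  also have "\<dots> = (if k = k' then of_nat N else 0)"
  proof (cases "k = k'")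
    case True
    hence "z = 1" unfolding z_def using rootu_n[OF N] by simp
    thus ?thesis using True by simp
  next
    case False
    have "z \<noteq> 1"
    proof
      assume "z = 1"
      hence "N dvd (k + N - k')" unfolding z_def using rootu_pow_eq1[OF N] by simp
      then obtain d where d: "k + N - k' = N * d" by (auto elim: dvdE)
      have "N * d < N * 2" using k k' d by linarith
      hence d2: "d < 2" by simp
      have "N * d > 0" using k k' d by linarith
      hence "d > 0" by simp
      with d2 have "d = 1" by simp
      with d have "k + N - k' = N" by simp
      thus False using False k k' by linarith
    qed
    moreover have "z ^ N = 1" unfolding z_def using rootu_n[OF N]
      by (simp add: power_mult[symmetric] mult.commute[of _ N] power_mult)
    ultimately show ?thesis using False geom_zero by simp
  qed
  finally show ?thesis .
qed


lemma rootu_shift: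
  assumes N: "N \<ge> 1" and l: "l < N"
  shows "rootu N ^ (j * ((i + N - l) mod N)) = rootu N ^ (j * i) * cnj (rootu N ^ (j * l))"
proof -
  have "rootu N ^ (j * ((i + N - l) mod N)) = rootu N ^ (j * (i + N) - j * l)"
    using N l by (subst rootu_pow_eq) (auto simp: mod_mult_right_eq diff_mult_distrib2)
  also have "\<dots> = rootu N ^ (j * (i + N)) * cnj (rootu N ^ (j * l))"
    using N l by (intro rootu_cnj_mult) auto
  also have "rootu N ^ (j * (i + N)) = rootu N ^ (j * i)"
    using N by (subst rootu_pow_eq) (auto simp: distrib_left)
  finally show ?thesis .
qed

lemma autocorr_dft:
  fixes c :: "nat \<Rightarrow> int"
  assumes N: "N \<ge> 1"
  shows "(\<Sum>k<N. of_int (\<Sum>i<N. \<Sum>l<N. if (i + N - l) mod N = k then c i * c l else 0) * rootu N ^ (j * k))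
       = (\<Sum>i<N. of_int (c i) * rootu N ^ (j * i)) * cnj (\<Sum>i<N. of_int (c i) * rootu N ^ (j * i))"
proof -
  have "(\<Sum>k<N. of_int (\<Sum>i<N. \<Sum>l<N. if (i + N - l) mod N = k then c i * c l else 0) * rootu N ^ (j * k))
      = (\<Sum>k<N. \<Sum>i<N. \<Sum>l<N. if (i + N - l) mod N = k then of_int (c i * c l) * rootu N ^ (j * k) else 0)"
    unfolding of_int_sum sum_distrib_right by (intro sum.cong refl) simp
  also have "\<dots> = (\<Sum>i<N. \<Sum>k<N. \<Sum>l<N. if (i + N - l) mod N = k then of_int (c i * c l) * rootu N ^ (j * k) else 0)"
    by (rule sum.swap)
  also have "\<dots> = (\<Sum>i<N. \<Sum>l<N. \<Sum>k<N. if (i + N - l) mod N = k then of_int (c i * c l) * rootu N ^ (j * k) else 0)"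
    by (rule sum.cong[OF refl], rule sum.swap)
  also have "\<dots> = (\<Sum>i<N. \<Sum>l<N. of_int (c i * c l) * rootu N ^ (j * ((i + N - l) mod N)))"
    using N by (intro sum.cong refl) (simp add: sum.delta)
  also have "\<dots> = (\<Sum>i<N. \<Sum>l<N. (of_int (c i) * rootu N ^ (j * i)) * (of_int (c l) * cnj (rootu N ^ (j * l))))"
    using N by (intro sum.cong refl) (simp add: rootu_shift mult_ac)
  also have "\<dots> = (\<Sum>i<N. of_int (c i) * rootu N ^ (j * i)) * cnj (\<Sum>i<N. of_int (c i) * rootu N ^ (j * i))"
    by (simp add: sum_product cnj_sum)
  finally show ?thesis .
qed

lemma cw_dft:
  fixes c :: "nat \<Rightarrow> int" and w :: real
  assumes N: "N \<ge> 1"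
  shows "(\<forall>k<N. real_of_int (\<Sum>i<N. \<Sum>l<N. if (i + N - l) mod N = k then c i * c l else 0) = (if k = 0 then w else 0))
     \<longleftrightarrow> (\<forall>j<N. (\<Sum>i<N. of_int (c i) * rootu N ^ (j * i)) * cnj (\<Sum>i<N. of_int (c i) * rootu N ^ (j * i)) = of_real w)"
proof -
  define R where "R k = (\<Sum>i<N. \<Sum>l<N. if (i + N - l) mod N = k then c i * c l else 0)" for k
  define ch where "ch j = (\<Sum>i<N. of_int (c i) * rootu N ^ (j * i))" for j
  have dft: "(\<Sum>k<N. of_int (R k) * rootu N ^ (j * k)) = ch j * cnj (ch j)" for j
    unfolding R_def ch_def by (rule autocorr_dft[OF N])
  have "(\<forall>k<N. real_of_int (R k) = (if k = 0 then w else 0)) \<longleftrightarrow> (\<forall>j<N. ch j * cnj (ch j) = of_real w)"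
  proof
    assume H: "\<forall>k<N. real_of_int (R k) = (if k = 0 then w else 0)"
    show "\<forall>j<N. ch j * cnj (ch j) = of_real w"
    proof (intro allI impI)
      fix j assume "j < N"
      have "ch j * cnj (ch j) = (\<Sum>k<N. of_int (R k) * rootu N ^ (j * k))" by (simp add: dft)
      also have "\<dots> = (\<Sum>k<N. if k = 0 then of_real w else 0)"
      proof (intro sum.cong refl)
        fix k assume "k \<in> {..<N}"
        hence "complex_of_real (real_of_int (R k)) = complex_of_real (if k = 0 then w else 0)" using H by simp
        hence "of_int (R k) = (if k = 0 then complex_of_real w else 0)" by (auto split: if_splits)
        thus "of_int (R k) * rootu N ^ (j * k) = (if k = 0 then complex_of_real w else 0)" by simp
      qed
      also have "\<dots> = of_real w" using N by (simp add: sum.delta')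
      finally show "ch j * cnj (ch j) = of_real w" .
    qed
  next
    assume H: "\<forall>j<N. ch j * cnj (ch j) = of_real w"
    show "\<forall>k<N. real_of_int (R k) = (if k = 0 then w else 0)"
    proof (intro allI impI)
      fix k' assume k': "k' < N"
      have "(\<Sum>j<N. cnj (rootu N ^ (j * k')) * (\<Sum>k<N. of_int (R k) * rootu N ^ (j * k)))
          = (\<Sum>k<N. of_int (R k) * (\<Sum>j<N. rootu N ^ (j * k) * cnj (rootu N ^ (j * k'))))"
      proof -
        have "(\<Sum>j<N. cnj (rootu N ^ (j * k')) * (\<Sum>k<N. of_int (R k) * rootu N ^ (j * k)))
           = (\<Sum>j<N. \<Sum>k<N. of_int (R k) * (rootu N ^ (j * k) * cnj (rootu N ^ (j * k'))))"
          by (simp add: sum_distrib_left mult_ac)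
        also have "\<dots> = (\<Sum>k<N. \<Sum>j<N. of_int (R k) * (rootu N ^ (j * k) * cnj (rootu N ^ (j * k'))))"
          by (rule sum.swap)
        also have "\<dots> = (\<Sum>k<N. of_int (R k) * (\<Sum>j<N. rootu N ^ (j * k) * cnj (rootu N ^ (j * k'))))"
          by (simp add: sum_distrib_left)
        finally show ?thesis .
      qed
      also have "\<dots> = (\<Sum>k<N. of_int (R k) * (if k = k' then of_nat N else 0))"
      proof (rule sum.cong[OF refl])
        fix k assume "k \<in> {..<N}"
        thus "of_int (R k) * (\<Sum>j<N. rootu N ^ (j * k) * cnj (rootu N ^ (j * k'))) = of_int (R k) * (if k = k' then of_nat N else 0)"
          using rootu_orth[OF N _ k', of k] by simp
      qed
      also have "\<dots> = of_int (R k') * of_nat N" using k' by (simp add: sum.delta' if_distrib cong: if_cong)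
      finally have A: "(\<Sum>j<N. cnj (rootu N ^ (j * k')) * (\<Sum>k<N. of_int (R k) * rootu N ^ (j * k))) = of_int (R k') * of_nat N" .
      have "(\<Sum>j<N. cnj (rootu N ^ (j * k')) * (\<Sum>k<N. of_int (R k) * rootu N ^ (j * k)))
          = (\<Sum>j<N. of_real w * (rootu N ^ (j * 0) * cnj (rootu N ^ (j * k'))))"
        using H by (intro sum.cong refl) (simp add: dft mult_ac)
      also have "\<dots> = of_real w * (\<Sum>j<N. rootu N ^ (j * 0) * cnj (rootu N ^ (j * k')))"
        by (simp only: sum_distrib_left)
      also have "\<dots> = of_real w * (if 0 = k' then of_nat N else 0)"
        by (subst rootu_orth[OF N _ k']) (use N in auto)
      finally have B: "of_int (R k') * of_nat N = complex_of_real w * (if 0 = k' then of_nat N else 0)"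
        using A by simp
      have "complex_of_real (real_of_int (R k')) = complex_of_real (if k' = 0 then w else 0)"
        using B N by (auto split: if_splits)
      thus "real_of_int (R k') = (if k' = 0 then w else 0)" by (simp only: of_real_eq_iff)
    qed
  qed
  thus ?thesis unfolding R_def ch_def .
qed


lemma sum_roots_algint:
  fixes k :: "'b \<Rightarrow> nat"
  assumes n: "n \<ge> 1" and X: "finite X"
  shows "algebraic_int (\<Sum>x\<in>X. rootu n ^ k x)"
proof -
  define eta where "eta = (\<Sum>x\<in>X. rootu n ^ k x)"
  define M :: "int mat" where "M = mat n n (\<lambda>(i,j). int (card {x\<in>X. (k x + i) mod n = j}))"
  define M' :: "complex mat" where "M' = map_mat of_int M"
  define v :: "complex vec" where "v = vec n (\<lambda>j. rootu n ^ j)"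
  have M: "M \<in> carrier_mat n n" by (simp add: M_def)
  have M': "M' \<in> carrier_mat n n" by (simp add: M'_def M_def)
  have Mv: "M' *\<^sub>v v = eta \<cdot>\<^sub>v v"
  proof (rule eq_vecI)
    fix i assume "i < dim_vec (eta \<cdot>\<^sub>v v)"
    hence i: "i < n" by (simp add: v_def)
    have "(M' *\<^sub>v v) $ i = (\<Sum>j<n. of_nat (card {x\<in>X. (k x + i) mod n = j}) * rootu n ^ j)"
      using i by (simp add: M'_def M_def v_def scalar_prod_def row_def atLeast0LessThan)
    also have "\<dots> = (\<Sum>j<n. \<Sum>x\<in>{x\<in>X. (k x + i) mod n = j}. rootu n ^ ((k x + i) mod n))"
      by (intro sum.cong refl) simp
    also have "\<dots> = (\<Sum>x\<in>X. rootu n ^ ((k x + i) mod n))"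
      using n X by (intro sum.group) auto
    also have "\<dots> = (\<Sum>x\<in>X. rootu n ^ k x * rootu n ^ i)"
      using n by (intro sum.cong refl) (simp add: rootu_pow_mod power_add)
    also have "\<dots> = eta * v $ i" using i by (simp add: eta_def v_def sum_distrib_right)
    also have "\<dots> = (eta \<cdot>\<^sub>v v) $ i" using i by (simp add: v_def)
    finally show "(M' *\<^sub>v v) $ i = (eta \<cdot>\<^sub>v v) $ i" .
  qed (simp add: v_def M'_def M_def)
  have "eigenvector M' v eta"
    unfolding eigenvector_def
  proof (intro conjI)
    show "v \<in> carrier_vec (dim_row M')" by (simp add: v_def M'_def M_def)
    show "v \<noteq> 0\<^sub>v (dim_row M')"
    proof
      assume "v = 0\<^sub>v (dim_row M')"
      hence "v $ 0 = 0\<^sub>v (dim_row M') $ 0" by simp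
      thus False using n by (simp add: v_def M'_def M_def)
    qed
  qed (rule Mv)
  hence "eigenvalue M' eta" unfolding eigenvalue_def by blast
  hence "poly (char_poly M') eta = 0" using eigenvalue_root_char_poly[OF M'] by simp
  moreover have "char_poly M' = map_poly of_int (char_poly M)"
    unfolding M'_def by (rule of_int_hom.char_poly_hom[OF M])
  ultimately have "poly (map_poly of_int (char_poly M)) eta = 0" by simp
  moreover have "lead_coeff (char_poly M) = 1" using degree_monic_char_poly[OF M] by simp
  ultimately show ?thesis unfolding eta_def[symmetric] algebraic_int_altdef_ipoly by blast
qed


lemma sum_split2: "(\<Sum>i<(a::nat)+(b::nat). h i) = (\<Sum>i<a. h i) + (\<Sum>i<b. h (a+i))"
  by (induction b) (simp_all add: add_ac)

locale semiprim = ffN p f g N for p f :: nat and g :: "'a::{finite,field}" and N :: nat +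
  fixes e :: nat
  assumes f2e: "f = 2 * e" and Nm: "N dvd (p ^ e + 1)"
begin

abbreviation m where "m \<equiv> p ^ e"

lemma p0: "0 < p" using p1 by simp
lemma e1: "e \<ge> 1" using f1 f2e by simp
lemma m2: "m \<ge> 2"
proof -
  have "p ^ 1 \<le> p ^ e" using p1 e1 by (intro power_increasing) auto
  thus ?thesis using p2 by simp
qed
lemma qm: "CARD('a) = m * m" using card f2e by (simp add: power_mult power2_eq_square mult.commute)
lemma aux_sq: "(k::nat) \<ge> 1 \<Longrightarrow> k * k - 1 = (k - 1) * (k + 1)"
  by (cases k) (simp_all add: algebra_simps)
lemma qm1: "CARD('a) - 1 = (m - 1) * (m + 1)"
proof -
  have "1 \<le> m" using m2 by simp
  hence "m * m - 1 = (m - 1) * (m + 1)" by (rule aux_sq)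
  thus ?thesis by (simp only: qm)
qed

definition Fe :: "'a set" where "Fe = {z. z ^ m = z}"

lemma Fe0: "0 \<in> Fe" using p0 by (simp add: Fe_def)
lemma Fe_add: "a \<in> Fe \<Longrightarrow> b \<in> Fe \<Longrightarrow> a + b \<in> Fe" by (simp add: Fe_def frob)
lemma Fe_neg: "a \<in> Fe \<Longrightarrow> - a \<in> Fe" by (simp add: Fe_def frob_neg)

lemma Fe_card: "card Fe \<ge> m"
proof -
  have sub: "insert 0 ((\<lambda>t. g ^ ((m + 1) * t)) ` {..<m - 1}) \<subseteq> Fe"
  proof
    fix z assume "z \<in> insert 0 ((\<lambda>t. g ^ ((m + 1) * t)) ` {..<m - 1})"
    then consider "z = 0" | t where "z = g ^ ((m + 1) * t)" by auto
    thus "z \<in> Fe"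
    proof cases
      case 1 thus ?thesis using Fe0 by simp
    next
      case (2 t)
      have ex: "(m + 1) * t * (m - 1) = (CARD('a) - 1) * t" by (simp only: qm1 mult_ac)
      have "z ^ (m - 1) = g ^ ((m + 1) * t * (m - 1))" by (simp only: 2 power_mult)
      also have "\<dots> = (g ^ (CARD('a) - 1)) ^ t" by (simp only: ex power_mult)
      also have "\<dots> = 1" using pow_q1[OF g0] by simp
      finally have A: "z ^ (m - 1) * z = z" by simp
      have B: "z ^ (m - 1) * z = z ^ m" using m2
        by (metis Suc_diff_1 less_le_trans pos2 power_Suc2)
      have "z ^ m = z ^ (m - 1) * z" by (rule B[symmetric])
      also have "\<dots> = z" by (rule A)
      finally show ?thesis by (simp add: Fe_def)
    qed
  qed
  have inj: "inj_on (\<lambda>t. g ^ ((m + 1) * t)) {..<m - 1}"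
  proof (rule inj_onI)
    fix s t assume s: "s \<in> {..<m - 1}" and t: "t \<in> {..<m - 1}" and eq: "g ^ ((m + 1) * s) = g ^ ((m + 1) * t)"
    have "(m + 1) * s < (m + 1) * (m - 1)" by (rule mult_strict_left_mono) (use s in auto)
    moreover have "(m + 1) * t < (m + 1) * (m - 1)" by (rule mult_strict_left_mono) (use t in auto)
    ultimately have "(m + 1) * s < (m + 1) * (m - 1)" "(m + 1) * t < (m + 1) * (m - 1)" by auto
    hence "(m + 1) * s < ordg" "(m + 1) * t < ordg" using ordg_eq qm1 by (simp_all add: mult.commute)
    hence "(m + 1) * s = (m + 1) * t" using pow_inj_lt eq by blast
    hence "s = t \<or> m + 1 = 0" by (simp only: mult_cancel1)
    thus "s = t" by simp
  qed
  have "0 \<notin> (\<lambda>t. g ^ ((m + 1) * t)) ` {..<m - 1}" using g0 by auto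
  hence "card (insert 0 ((\<lambda>t. g ^ ((m + 1) * t)) ` {..<m - 1})) = m"
    using inj m2 by (simp add: card_image)
  moreover have "card (insert 0 ((\<lambda>t. g ^ ((m + 1) * t)) ` {..<m - 1})) \<le> card Fe"
    by (rule card_mono[OF _ sub]) simp
  ultimately show ?thesis by simp
qed

lemma tr_Fe: "z \<in> Fe \<Longrightarrow> Tr (x * z) = (\<Sum>i<e. ((x + x ^ m) * z) ^ (p ^ i))"
proof -
  assume z: "z \<in> Fe"
  have "Tr (x * z) = (\<Sum>i<e + e. (x * z) ^ (p ^ i))" by (simp add: field_trace_def f2e mult_2)
  also have "\<dots> = (\<Sum>i<e. (x * z) ^ (p ^ i)) + (\<Sum>i<e. (x * z) ^ (p ^ (e + i)))" by (rule sum_split2)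
  also have "(\<Sum>i<e. (x * z) ^ (p ^ (e + i))) = (\<Sum>i<e. (x ^ m * z) ^ (p ^ i))"
  proof (intro sum.cong refl)
    fix i
    have "(x * z) ^ (p ^ (e + i)) = ((x * z) ^ m) ^ (p ^ i)" by (simp add: power_add power_mult)
    also have "(x * z) ^ m = x ^ m * z" using z by (simp add: Fe_def power_mult_distrib)
    finally show "(x * z) ^ (p ^ (e + i)) = (x ^ m * z) ^ (p ^ i)" .
  qed
  also have "(\<Sum>i<e. (x * z) ^ (p ^ i)) + (\<Sum>i<e. (x ^ m * z) ^ (p ^ i)) = (\<Sum>i<e. ((x + x ^ m) * z) ^ (p ^ i))"
    by (simp add: sum.distrib[symmetric] frob[symmetric] distrib_right)
  finally show ?thesis .
qed

lemma Fe_sum: "(\<Sum>z\<in>Fe. psi (x * z)) = (if x + x ^ m = 0 then of_nat (card Fe) else 0)"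
proof -
  have "(\<forall>z\<in>Fe. Tr (x * z) = 0) \<longleftrightarrow> x + x ^ m = 0"
  proof
    assume H: "\<forall>z\<in>Fe. Tr (x * z) = 0"
    show "x + x ^ m = 0"
    proof (rule ccontr)
      assume ne: "x + x ^ m \<noteq> 0"
      define c where "c i = (x + x ^ m) ^ (p ^ i)" for i
      have "Fe \<subseteq> {z. (\<Sum>i<e. c i * z ^ (p ^ i)) = 0}"
        using H tr_Fe by (auto simp: c_def power_mult_distrib)
      hence "card Fe \<le> card {z. (\<Sum>i<e. c i * z ^ (p ^ i)) = 0}" by (intro card_mono) auto
      also have "\<dots> \<le> p ^ (e - 1)" by (rule root_bound_frob) (use p e1 ne in \<open>auto simp: c_def\<close>)
      also have "\<dots> < p ^ e" using p1 e1 by (intro power_strict_increasing) auto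
      finally show False using Fe_card by simp
    qed
  next
    assume "x + x ^ m = 0"
    thus "\<forall>z\<in>Fe. Tr (x * z) = 0" using p1 by (simp add: tr_Fe power_0_left)
  qed
  thus ?thesis by (subst char_sum_subgroup) (auto intro: Fe0 Fe_add Fe_neg)
qed

end


context semiprim begin

lemma ind_mod_N: "(x::'a) \<noteq> 0 \<Longrightarrow> y \<noteq> 0 \<Longrightarrow> ind (x * y) mod N = (ind x + ind y) mod N"
  using ind_mult by (metis mod_mod_cancel[OF Ndvd])

lemma Fe_C0: "z \<in> Fe \<Longrightarrow> z \<noteq> 0 \<Longrightarrow> ind z mod N = 0"
proof -
  assume z: "z \<in> Fe" "z \<noteq> 0"
  define k where "k = ind z"
  have gk: "g ^ k = z" using ind[OF z(2)] by (simp add: k_def)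
  have "z ^ (m - 1) * z = z ^ m" using m2
    by (metis Suc_diff_1 less_le_trans pos2 power_Suc2)
  also have "\<dots> = 1 * z" using z(1) by (simp add: Fe_def)
  finally have "z ^ (m - 1) = 1" using z(2) by simp
  hence "g ^ (k * (m - 1)) = g ^ 0" using gk by (simp add: power_mult)
  hence "(k * (m - 1)) mod (CARD('a) - 1) = 0" using pow_eq_iff'[of "k * (m - 1)" 0] by simp
  hence "(CARD('a) - 1) dvd (k * (m - 1))" by (simp only: mod_eq_0_iff_dvd)
  hence "(m - 1) * (m + 1) dvd (m - 1) * k" by (simp only: qm1 mult.commute[of k])
  hence "(m + 1) dvd k" using m2 nat_mult_dvd_cancel1[of "m - 1" "m + 1" k] by simp
  hence "N dvd k" using Nm dvd_trans by blast
  thus ?thesis by (simp add: k_def)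
qed

definition C :: "nat \<Rightarrow> 'a set" where "C a = {x. x \<noteq> 0 \<and> ind x mod N = a}"

lemma eta_C: "a < N \<Longrightarrow> gauss_period p f N g a = (\<Sum>x\<in>C a. psi x)"
proof -
  assume a: "a < N"
  show ?thesis by (simp only: gauss_period_def C_def coset_eq[OF a])
qed

lemma mod_aux: "r < (n::nat) \<Longrightarrow> a < n \<Longrightarrow> (r + a) mod n = a \<Longrightarrow> r = 0"
proof (cases "r + a < n")
  case False
  assume h: "r < n" "a < n" "(r + a) mod n = a"
  have "(r + a) mod n = (r + a - n) mod n" using False by (simp add: le_mod_geq)
  also have "\<dots> = r + a - n" using h by (intro mod_less) linarith
  finally show ?thesis using h False by linarith
qed simp

lemma C_card: "a < N \<Longrightarrow> card (C a) = card (C 0)"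
proof -
  assume a: "a < N"
  have ga: "g ^ a \<noteq> 0" using g0 by simp
  have "bij_betw (\<lambda>x. g ^ a * x) (C 0) (C a)"
  proof (rule bij_betwI[of _ _ _ "\<lambda>x. x / g ^ a"])
    show "(\<lambda>x. g ^ a * x) \<in> C 0 \<rightarrow> C a"
    proof
      fix x assume "x \<in> C 0"
      hence x: "x \<noteq> 0" "ind x mod N = 0" by (auto simp: C_def)
      have "ind (g ^ a * x) mod N = (ind (g ^ a) + ind x) mod N" using ind_mod_N[OF ga x(1)] .
      also have "\<dots> = (ind (g ^ a) mod N + ind x mod N) mod N" by (simp add: mod_add_eq)
      also have "ind (g ^ a) mod N = a mod N" using mod_mod_cancel[OF Ndvd] by (simp add: ind_pow)
      finally show "g ^ a * x \<in> C a" using x a ga by (simp add: C_def)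
    qed
    show "(\<lambda>x. x / g ^ a) \<in> C a \<rightarrow> C 0"
    proof
      fix x assume "x \<in> C a"
      hence x: "x \<noteq> 0" "ind x mod N = a" by (auto simp: C_def)
      have y: "x / g ^ a \<noteq> 0" using x ga by simp
      have "ind x mod N = ind (x / g ^ a * g ^ a) mod N" using ga by simp
      also have "\<dots> = (ind (x / g ^ a) + ind (g ^ a)) mod N" using ind_mod_N[OF y ga] .
      also have "\<dots> = (ind (x / g ^ a) + ind (g ^ a) mod N) mod N" by (simp add: mod_add_right_eq)
      also have "ind (g ^ a) mod N = a" using a using mod_mod_cancel[OF Ndvd] by (simp add: ind_pow)
      finally have "(ind (x / g ^ a) + a) mod N = a" using x by simp
      hence "(ind (x / g ^ a) mod N + a) mod N = a" by (simp add: mod_add_left_eq)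
      hence "ind (x / g ^ a) mod N = 0" using mod_aux[of "ind (x / g ^ a) mod N" N a] a N1 by simp
      thus "x / g ^ a \<in> C 0" using y by (simp add: C_def)
    qed
  qed (use ga in auto)
  thus ?thesis by (simp add: bij_betw_same_card)
qed

lemma C_Fe_mult: "x \<in> C a \<Longrightarrow> z \<in> Fe - {0} \<Longrightarrow> x * z \<in> C a"
proof -
  assume x: "x \<in> C a" and z: "z \<in> Fe - {0}"
  hence x': "x \<noteq> 0" "ind x mod N = a" and z': "z \<in> Fe" "z \<noteq> 0" by (auto simp: C_def)
  have "ind (x * z) mod N = (ind x + ind z) mod N" using ind_mod_N[OF x'(1) z'(2)] .
  also have "\<dots> = (ind x + ind z mod N) mod N" by (simp add: mod_add_right_eq)
  also have "ind z mod N = 0" using Fe_C0 z' by simp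
  finally show ?thesis using x' z' by (simp add: C_def)
qed

lemma eta_formula:
  assumes a: "a < N"
  shows "of_nat (card Fe - 1) * gauss_period p f N g a
       = of_nat (card Fe) * of_nat (card {x\<in>C a. x + x ^ m = 0}) - of_nat (card (C a))"
proof -
  have fin: "finite (C a)" "finite (Fe - {0})" by auto
  have cFe: "card (Fe - {0}) = card Fe - 1" using Fe0 by simp
  have "of_nat (card Fe - 1) * gauss_period p f N g a = (\<Sum>z\<in>Fe - {0}. \<Sum>x\<in>C a. psi x)"
    by (simp add: eta_C[OF a] cFe)
  also have "\<dots> = (\<Sum>z\<in>Fe - {0}. \<Sum>x\<in>C a. psi (x * z))"
  proof (rule sum.cong[OF refl])
    fix z assume z: "z \<in> Fe - {0}"
    have "bij_betw (\<lambda>x. x * z) (C a) (C a)"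
    proof (rule bij_betwI[of _ _ _ "\<lambda>x. x / z"])
      show "(\<lambda>x. x * z) \<in> C a \<rightarrow> C a" using C_Fe_mult z by blast
      have "inverse z \<in> Fe - {0}" using z by (auto simp: Fe_def power_inverse)
      hence "x * inverse z \<in> C a" if "x \<in> C a" for x using C_Fe_mult that by blast
      thus "(\<lambda>x. x / z) \<in> C a \<rightarrow> C a" by (auto simp: divide_inverse)
    qed (use z in auto)
    thus "(\<Sum>x\<in>C a. psi x) = (\<Sum>x\<in>C a. psi (x * z))"
      using sum.reindex_bij_betw[of "\<lambda>x. x * z" "C a" "C a" psi] by simp
  qed
  also have "\<dots> = (\<Sum>x\<in>C a. \<Sum>z\<in>Fe - {0}. psi (x * z))" by (rule sum.swap)
  also have "\<dots> = (\<Sum>x\<in>C a. (if x + x ^ m = 0 then of_nat (card Fe) else 0) - 1)"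
  proof (rule sum.cong[OF refl])
    fix x
    have "(\<Sum>z\<in>Fe. psi (x * z)) = (\<Sum>z\<in>Fe - {0}. psi (x * z)) + psi (x * 0)"
      using Fe0 by (subst sum.remove[of Fe 0]) auto
    thus "(\<Sum>z\<in>Fe - {0}. psi (x * z)) = (if x + x ^ m = 0 then of_nat (card Fe) else 0) - 1"
      by (simp add: Fe_sum)
  qed
  also have "\<dots> = of_nat (card Fe) * of_nat (card {x\<in>C a. x + x ^ m = 0}) - of_nat (card (C a))"
    by (simp add: sum_subtractf sum.If_cases Int_def conj_commute)
  finally show ?thesis .
qed

lemma Z_same:
  assumes x: "x \<noteq> 0" "x + x ^ m = 0" and y: "y \<noteq> 0" "y + y ^ m = 0"
  shows "ind x mod N = ind y mod N"
proof -
  have xm: "x ^ m = - x" using x(2) by (simp add: eq_neg_iff_add_eq_0 add.commute)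
  have ym: "y ^ m = - y" using y(2) by (simp add: eq_neg_iff_add_eq_0 add.commute)
  have "(x / y) ^ m = x / y" using y(1) by (simp add: power_divide xm ym)
  hence Fe: "x / y \<in> Fe" by (simp add: Fe_def)
  have ne: "x / y \<noteq> 0" using x y by simp
  have "ind x mod N = ind (x / y * y) mod N" using y by simp
  also have "\<dots> = (ind (x / y) + ind y) mod N" using ind_mod_N[OF ne y(1)] .
  also have "\<dots> = (ind (x / y) mod N + ind y) mod N" by (simp add: mod_add_left_eq)
  also have "ind (x / y) mod N = 0" using Fe_C0[OF Fe ne] .
  finally show ?thesis by simp
qed

lemma two_values:
  "\<exists>A B. \<forall>a<N. gauss_period p f N g a \<in> {A, B}"
proof -
  define Z where "Z = {x::'a. x \<noteq> 0 \<and> x + x ^ m = 0}"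
  define K where "K = card Fe"
  have K2: "K \<ge> 2" using Fe_card m2 by (simp add: K_def)
  have sets: "{x\<in>C a. x + x ^ m = 0} = {} \<or> {x\<in>C a. x + x ^ m = 0} = Z" for a
  proof (cases "{x\<in>C a. x + x ^ m = 0} = {}")
    case False
    then obtain y where y: "y \<in> C a" "y + y ^ m = 0" by auto
    have "{x\<in>C a. x + x ^ m = 0} = Z"
    proof (intro equalityI subsetI)
      fix x assume "x \<in> {x\<in>C a. x + x ^ m = 0}" thus "x \<in> Z" by (auto simp: C_def Z_def)
    next
      fix x assume "x \<in> Z"
      hence x: "x \<noteq> 0" "x + x ^ m = 0" by (auto simp: Z_def)
      have "ind x mod N = ind y mod N" using Z_same[OF x] y by (auto simp: C_def)
      thus "x \<in> {x\<in>C a. x + x ^ m = 0}" using x y by (auto simp: C_def)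
    qed
    thus ?thesis by simp
  qed simp
  define A :: complex where "A = (of_nat K * of_nat (card Z) - of_nat (card (C 0))) / of_nat (K - 1)"
  define B :: complex where "B = (- of_nat (card (C 0))) / of_nat (K - 1)"
  have "\<forall>a<N. gauss_period p f N g a \<in> {A, B}"
  proof (intro allI impI)
    fix a assume a: "a < N"
    have K1: "(of_nat (K - 1) :: complex) \<noteq> 0" using K2 by simp
    have eq: "of_nat (K - 1) * gauss_period p f N g a
       = of_nat K * of_nat (card {x\<in>C a. x + x ^ m = 0}) - of_nat (card (C 0))"
      using eta_formula[OF a] C_card[OF a] by (simp add: K_def)
    from sets[of a] show "gauss_period p f N g a \<in> {A, B}"
    proof
      assume "{x\<in>C a. x + x ^ m = 0} = {}"
      hence "of_nat (K - 1) * gauss_period p f N g a = - of_nat (card (C 0))" using eq by simp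
      hence "gauss_period p f N g a = B" using K1 by (simp add: B_def field_simps)
      thus ?thesis by simp
    next
      assume "{x\<in>C a. x + x ^ m = 0} = Z"
      hence "of_nat (K - 1) * gauss_period p f N g a = of_nat K * of_nat (card Z) - of_nat (card (C 0))"
        using eq by simp
      hence "gauss_period p f N g a = A" using K1 by (simp add: A_def field_simps)
      thus ?thesis by simp
    qed
  qed
  thus ?thesis by blast
qed

end


context ffN begin

lemma G_0: "G 0 = -1"
proof -
  have "G 0 = (\<Sum>y\<in>NZ. psi (1 * y))" by (simp add: G_def chi_def)
  also have "\<dots> = -1" by (simp only: sum_NZ_psi_mult) simp
  finally show ?thesis .
qed

lemma S_j: "0 < j \<Longrightarrow> j < N \<Longrightarrow> (\<Sum>i<N. rootu N ^ (j * i)) = 0"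
proof -
  assume j: "0 < j" "j < N"
  have "(\<Sum>i<N. rootu N ^ (j * i)) = (\<Sum>i<N. (rootu N ^ j) ^ i)" by (simp add: power_mult)
  also have "\<dots> = 0"
  proof (rule geom_zero)
    show "(rootu N ^ j) ^ N = 1" using N1 by (simp add: power_mult[symmetric] rootu_pow_eq1)
    have "\<not> N dvd j" using j by (auto dest: dvd_imp_le)
    thus "rootu N ^ j \<noteq> 1" using N1 by (simp add: rootu_pow_eq1)
  qed
  finally show ?thesis .
qed

lemma S_0: "(\<Sum>i<N. rootu N ^ (0 * i)) = of_nat N" by simp

lemma hat_c:
  fixes c :: "nat \<Rightarrow> int" and al t :: complex
  assumes H: "\<forall>a<N. gauss_period p f N g a = al - t * of_int (c a)" and t: "t \<noteq> 0"
  shows "(\<Sum>i<N. of_int (c i) * rootu N ^ (j * i)) = (al * (\<Sum>i<N. rootu N ^ (j * i)) - G j) / t"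
proof -
  have "G j = (\<Sum>a<N. rootu N ^ (j * a) * (al - t * of_int (c a)))"
    unfolding eta_G[symmetric] using H by (intro sum.cong refl) auto
  also have "\<dots> = al * (\<Sum>i<N. rootu N ^ (j * i)) - t * (\<Sum>i<N. of_int (c i) * rootu N ^ (j * i))"
    by (simp add: algebra_simps sum_subtractf sum_distrib_left)
  finally show ?thesis using t by (simp add: field_simps)
qed

lemma cw_iff:
  fixes c :: "nat \<Rightarrow> int" and al t :: real
  assumes H: "\<forall>a<N. gauss_period p f N g a = of_real al - of_real t * of_int (c a)" and t: "t \<noteq> 0"
  shows "(\<forall>k<N. real_of_int (\<Sum>i<N. \<Sum>l<N. if (i + N - l) mod N = k then c i * c l else 0)
              = (if k = 0 then real CARD('a) / t ^ 2 else 0))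
         \<longleftrightarrow> (real N * al + 1) ^ 2 = real CARD('a)"
proof -
  define ch where "ch j = (\<Sum>i<N. of_int (c i) * rootu N ^ (j * i))" for j
  have t': "complex_of_real t \<noteq> 0" using t by simp
  have hc: "ch j = (of_real al * (\<Sum>i<N. rootu N ^ (j * i)) - G j) / of_real t" for j
    unfolding ch_def using hat_c[OF H t'] .
  have nz: "ch j * cnj (ch j) = of_real (real CARD('a) / t ^ 2)" if j: "0 < j" "j < N" for j
  proof -
    have "ch j = - G j / of_real t" using hc[of j] S_j[OF j] by simp
    hence "ch j * cnj (ch j) = (G j * cnj (G j)) / (of_real t * of_real t)"
      by (simp add: field_simps)
    also have "G j * cnj (G j) = of_nat CARD('a)" using j by (intro G_norm) (auto dest: dvd_imp_le)
    finally show ?thesis by (simp add: power2_eq_square)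
  qed
  have z: "ch 0 = of_real ((real N * al + 1) / t)"
    using hc[of 0] by (simp add: G_0)
  have "(\<forall>k<N. real_of_int (\<Sum>i<N. \<Sum>l<N. if (i + N - l) mod N = k then c i * c l else 0)
              = (if k = 0 then real CARD('a) / t ^ 2 else 0))
       \<longleftrightarrow> (\<forall>j<N. ch j * cnj (ch j) = of_real (real CARD('a) / t ^ 2))"
    unfolding ch_def by (rule cw_dft[OF N1])
  also have "\<dots> \<longleftrightarrow> ch 0 * cnj (ch 0) = of_real (real CARD('a) / t ^ 2)"
  proof
    assume "\<forall>j<N. ch j * cnj (ch j) = of_real (real CARD('a) / t ^ 2)"
    thus "ch 0 * cnj (ch 0) = of_real (real CARD('a) / t ^ 2)" using N1 by auto
  next
    assume h0: "ch 0 * cnj (ch 0) = of_real (real CARD('a) / t ^ 2)"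
    show "\<forall>j<N. ch j * cnj (ch j) = of_real (real CARD('a) / t ^ 2)"
    proof (intro allI impI)
      fix j assume "j < N"
      thus "ch j * cnj (ch j) = of_real (real CARD('a) / t ^ 2)"
        using h0 nz[of j] by (cases "j = 0") auto
    qed
  qed
  also have "\<dots> \<longleftrightarrow> ((real N * al + 1) / t) ^ 2 = real CARD('a) / t ^ 2"
  proof -
    have "ch 0 * cnj (ch 0) = of_real (((real N * al + 1) / t) ^ 2)"
      unfolding z by (simp add: power2_eq_square)
    thus ?thesis by (simp only: of_real_eq_iff)
  qed
  also have "\<dots> \<longleftrightarrow> (real N * al + 1) ^ 2 = real CARD('a)"
    using t by (simp add: power_divide divide_cancel_right)
  finally show ?thesis .
qed

lemma eta_algint: "a < N \<Longrightarrow> algebraic_int (gauss_period p f N g a)"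
proof -
  assume a: "a < N"
  have "gauss_period p f N g a = (\<Sum>x\<in>{x. x \<noteq> 0 \<and> ind x mod N = a}. rootu p ^ trn x)"
    by (simp only: gauss_period_def coset_eq[OF a] psi_eq)
  also have "algebraic_int \<dots>" using p1 by (intro sum_roots_algint) auto
  finally show ?thesis .
qed

end


lemma of_real_of_rat_c: "complex_of_real (real_of_rat x) = of_rat x"
  by (cases x) (simp add: of_rat_rat)

lemma rat_sq_int:
  fixes r :: rat and q :: nat
  assumes "r ^ 2 = of_nat q"
  shows "\<exists>z::int. r = of_int z"
proof -
  define x where "x = real_of_rat r"
  have x2: "x ^ 2 = real q" using assms unfolding x_def by (metis of_rat_of_nat_eq of_rat_power)
  have "algebraic_int x"
  proof (rule algebraic_int.intros[of "[:- real q, 0, 1:]"])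
    show "lead_coeff [:- real q, 0, 1:] = 1" by simp
    show "\<forall>i. coeff [:- real q, 0, 1:] i \<in> \<int>"
    proof
      fix i show "coeff [:- real q, 0, 1:] i \<in> \<int>" by (simp add: coeff_pCons split: nat.split)
    qed
    show "poly [:- real q, 0, 1:] x = 0" using x2 by (simp add: power2_eq_square algebra_simps)
  qed
  moreover have "x \<in> \<rat>" by (simp add: x_def)
  ultimately have "x \<in> \<int>" by (rule rational_algebraic_int_is_int)
  then obtain z where "x = of_int z" by (auto elim: Ints_cases)
  hence "real_of_rat r = real_of_rat (of_int z)" by (simp add: x_def)
  thus ?thesis by (intro exI[of _ z]) (simp only: of_rat_eq_iff)
qed

theorem proposition2p6:
  fixes g :: "'a::{finite,field}" and p f N :: nat
    and \<alpha>1 \<alpha>2 \<alpha>3 t :: rat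
  assumes "prime p" and "CHAR('a) = p" and "CARD('a) = p ^ f"
    and "N > 2" and "N dvd (CARD('a) - 1)"
    and "primitive_elem g"
    and "gauss_period p f N g ` {0..<N} = {of_rat \<alpha>1, of_rat \<alpha>2, of_rat \<alpha>3}"
    and "t > 0" and "\<alpha>1 - \<alpha>2 = - t" and "\<alpha>3 - \<alpha>2 = t"
  shows "generates_CW N (real (CARD('a)) / (of_rat t)^2)
           {a \<in> {0..<N}. gauss_period p f N g a = of_rat \<alpha>1}
           {a \<in> {0..<N}. gauss_period p f N g a = of_rat \<alpha>3}
         \<longleftrightarrow> (\<exists>m::nat. CARD('a) = m ^ 2 \<and> real_of_rat \<alpha>2 = (real m - 1) / real N)"
proof -
  note A = assms
  interpret ffN p f g N using A by unfold_locales auto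
  define I1 where "I1 = {a \<in> {0..<N}. gauss_period p f N g a = of_rat \<alpha>1}"
  define I3 where "I3 = {a \<in> {0..<N}. gauss_period p f N g a = of_rat \<alpha>3}"
  define c where "c = row_of I1 I3"
  have a1: "\<alpha>1 = \<alpha>2 - t" and a3: "\<alpha>3 = \<alpha>2 + t" using A(9,10) by (simp_all add: algebra_simps)
  have d13: "(of_rat \<alpha>1 :: complex) \<noteq> of_rat \<alpha>3" using A(8) by (simp add: a1 a3 of_rat_eq_iff)
  have d12: "(of_rat \<alpha>1 :: complex) \<noteq> of_rat \<alpha>2" using A(8) by (simp add: a1 of_rat_eq_iff)
  have d23: "(of_rat \<alpha>2 :: complex) \<noteq> of_rat \<alpha>3" using A(8) by (simp add: a3 of_rat_eq_iff)
  have img: "gauss_period p f N g a \<in> {of_rat \<alpha>1, of_rat \<alpha>2, of_rat \<alpha>3}" if "a < N" for a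
  proof -
    have "gauss_period p f N g a \<in> gauss_period p f N g ` {0..<N}" using that by simp
    thus ?thesis by (simp only: A(7))
  qed
  have H: "\<forall>a<N. gauss_period p f N g a = of_real (real_of_rat \<alpha>2) - of_real (real_of_rat t) * of_int (c a)"
  proof (intro allI impI)
    fix a assume a: "a < N"
    from img[OF a] consider "gauss_period p f N g a = of_rat \<alpha>1" | "gauss_period p f N g a = of_rat \<alpha>2"
      | "gauss_period p f N g a = of_rat \<alpha>3" by blast
    thus "gauss_period p f N g a = of_real (real_of_rat \<alpha>2) - of_real (real_of_rat t) * of_int (c a)"
    proof cases
      case 1
      hence "c a = 1" using a by (simp add: c_def row_of_def I1_def)
      thus ?thesis using 1 by (simp add: of_real_of_rat_c a1 of_rat_diff)
    next
      case 2
      hence "c a = 0" using a d12 d23 by (simp add: c_def row_of_def I1_def I3_def)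
      thus ?thesis using 2 by (simp add: of_real_of_rat_c)
    next
      case 3
      hence "c a = -1" using a d13 by (simp add: c_def row_of_def I1_def I3_def)
      thus ?thesis using 3 by (simp add: of_real_of_rat_c a3 of_rat_add)
    qed
  qed
  have t0: "real_of_rat t \<noteq> 0" using A(8) by simp
  have "generates_CW N (real (CARD('a)) / (of_rat t)^2) I1 I3
        \<longleftrightarrow> (real N * real_of_rat \<alpha>2 + 1) ^ 2 = real CARD('a)"
    unfolding generates_CW_def c_def[symmetric] by (rule cw_iff[OF H t0])
  also have "\<dots> \<longleftrightarrow> (\<exists>m::nat. CARD('a) = m ^ 2 \<and> real_of_rat \<alpha>2 = (real m - 1) / real N)"
  proof
    assume "\<exists>m::nat. CARD('a) = m ^ 2 \<and> real_of_rat \<alpha>2 = (real m - 1) / real N"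
    then obtain m :: nat where m: "CARD('a) = m ^ 2" "real_of_rat \<alpha>2 = (real m - 1) / real N" by blast
    have "real N * real_of_rat \<alpha>2 + 1 = real m" using m(2) A(4) by simp
    thus "(real N * real_of_rat \<alpha>2 + 1) ^ 2 = real CARD('a)" using m(1) by simp
  next
    assume sq: "(real N * real_of_rat \<alpha>2 + 1) ^ 2 = real CARD('a)"
    define r where "r = of_nat N * \<alpha>2 + 1"
    have rr: "real_of_rat r = real N * real_of_rat \<alpha>2 + 1" by (simp add: r_def of_rat_add of_rat_mult)
    have "real_of_rat (r ^ 2) = real_of_rat (of_nat CARD('a))" using sq by (simp add: of_rat_power rr)
    hence "r ^ 2 = of_nat CARD('a)" by (simp only: of_rat_eq_iff)
    then obtain z :: int where z: "r = of_int z" using rat_sq_int by blast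
    have zq: "real_of_int z ^ 2 = real CARD('a)" using sq rr z by simp
    show "\<exists>m::nat. CARD('a) = m ^ 2 \<and> real_of_rat \<alpha>2 = (real m - 1) / real N"
    proof (cases "z \<ge> 0")
      case True
      define m where "m = nat z"
      have zm: "real_of_int z = real m" using True by (simp add: m_def)
      have "real (m ^ 2) = real CARD('a)" using zq zm by simp
      hence "CARD('a) = m ^ 2" by (simp only: of_nat_eq_iff)
      moreover have "real_of_rat \<alpha>2 = (real m - 1) / real N"
        using rr z zm A(4) by (simp add: field_simps)
      ultimately show ?thesis by blast
    next
      case False
      define m where "m = nat (- z)"
      have zm: "real_of_int z = - real m" using False by (simp add: m_def)
      have "real (m ^ 2) = real CARD('a)" using zq zm by simp
      hence qm: "CARD('a) = m ^ 2" by (simp only: of_nat_eq_iff)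
      have "(of_rat \<alpha>2 :: complex) \<in> gauss_period p f N g ` {0..<N}" by (simp only: A(7)) simp
      then obtain a2 where a2: "a2 < N" "gauss_period p f N g a2 = of_rat \<alpha>2" by auto
      have "algebraic_int (of_rat \<alpha>2 :: complex)" using eta_algint[OF a2(1)] a2(2) by simp
      moreover have "(of_rat \<alpha>2 :: complex) \<in> \<rat>" by simp
      ultimately have "(of_rat \<alpha>2 :: complex) \<in> \<int>" by (rule rational_algebraic_int_is_int)
      then obtain z2 where "(of_rat \<alpha>2 :: complex) = of_int z2" by (auto elim: Ints_cases)
      hence "(of_rat \<alpha>2 :: complex) = of_rat (of_int z2)" by simp
      hence z2: "\<alpha>2 = of_int z2" by (simp only: of_rat_eq_iff)
      have X: "of_int (int N * z2 + 1) = r" by (simp add: r_def z2)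
      have "(of_int (int N * z2 + 1) :: rat) = of_int z" by (rule trans[OF X z])
      hence "int N * z2 + 1 = z" by (simp only: of_int_eq_iff)
      hence "int N * (- z2) = int (m + 1)" using False by (simp add: m_def algebra_simps)
      hence "int N dvd int (m + 1)" by (intro dvdI[of _ _ "- z2"]) (simp add: mult.commute)
      hence Nm: "N dvd (m + 1)" by (simp only: of_nat_dvd_iff)
      have "p ^ f = m * m" using qm A(3) by (simp add: power2_eq_square)
      hence "m dvd p ^ f" by simp
      then obtain e where e: "e \<le> f" "m = p ^ e" using divides_primepow_nat[OF A(1)] by blast
      have "p ^ f = p ^ (2 * e)" using qm A(3) e by (simp add: power_mult power2_eq_square mult.commute)
      hence f2e: "f = 2 * e" using p1 by (simp add: power_inject_exp)
      interpret semiprim p f g N e by unfold_locales (use f2e Nm e in auto)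
      obtain AA BB where AB: "\<forall>a<N. gauss_period p f N g a \<in> {AA, BB}" using two_values by blast
      have "{of_rat \<alpha>1, of_rat \<alpha>2, of_rat \<alpha>3} \<subseteq> {AA, BB}"
      proof
        fix v assume "v \<in> {of_rat \<alpha>1, of_rat \<alpha>2, (of_rat \<alpha>3 :: complex)}"
        hence "v \<in> gauss_period p f N g ` {0..<N}" by (simp only: A(7))
        then obtain a where "a < N" "v = gauss_period p f N g a" by auto
        thus "v \<in> {AA, BB}" using AB by simp
      qed
      hence "card {of_rat \<alpha>1, of_rat \<alpha>2, (of_rat \<alpha>3 :: complex)} \<le> card {AA, BB}"
        by (intro card_mono) auto
      also have "card {AA, BB} \<le> 2" by (simp add: card_insert_le_m1)
      finally show ?thesis using d12 d13 d23 by simp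
    qed
  qed
  finally show ?thesis unfolding I1_def I3_def .
qed


end
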